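(* Let $n\ge2$ and let $Q=K(n,n)$ be the complete bipartite quiver with $n$ sources and $n$ sinks and exactly one arrow from each source to each sink. Suppose $m_1+\dots+m_k=q_1+\dots+q_k$ for some $k\ge4$, where all $m_i,q_j$ are (characteristic vectors in $\mathbb{Z}^{Q_1}$ of) perfect matchings of $Q$. Suppose moreover that for some $0\le l\le n-2$ there is a near perfect matching $p$ with $p\le m_1+m_2$ such that $p$ contains $l$ arrows of $q_1$. Then there exist $j\ge3$, perfect matchings $m'_1,m'_2,m'_j$ and a near perfect matching $p'$ such that $m_1+m_2+m_j=m'_1+m'_2+m'_j$, $p'\le m'_1+m'_2$, and $p'$ contains $l+1$ arrows of $q_1$.
   Context: A perfect matching of $K(n,n)$ is a set of $n$ arrows covering each vertex exactly once; a near perfect matching is a set of $n-1$ pairwise disjoint arrows (covering all vertices except one source and one sink). Matchings are identified with their characteristic vectors in $\mathbb{Z}_{\ge0}^{Q_1}$, and $\le$ denotes the componentwise partial order on $\mathbb{Z}^{Q_1}$. *)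

theory Defs
  imports Main
begin

text \<open>The complete bipartite quiver K(n,n): sources 0..n-1, sinks 0..n-1,
  one arrow (i,j) from source i to sink j. Subsets of arrows are identified
  with their characteristic vectors in Z^{Q_1}.\<close>

definition arrows :: "nat \<Rightarrow> (nat \<times> nat) set" where
  "arrows n = {0..<n} \<times> {0..<n}"

definition disjoint_arrows :: "(nat \<times> nat) set \<Rightarrow> bool" where
  "disjoint_arrows M \<longleftrightarrow>
     (\<forall>a\<in>M. \<forall>b\<in>M. a \<noteq> b \<longrightarrow> fst a \<noteq> fst b \<and> snd a \<noteq> snd b)"

definition perfect_matching :: "nat \<Rightarrow> (nat \<times> nat) set \<Rightarrow> bool" where
  "perfect_matching n M \<longleftrightarrow> M \<subseteq> arrows n \<and>
     (\<forall>i<n. \<exists>!j. (i, j) \<in> M) \<and> (\<forall>j<n. \<exists>!i. (i, j) \<in> M)"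

definition near_perfect_matching :: "nat \<Rightarrow> (nat \<times> nat) set \<Rightarrow> bool" where
  "near_perfect_matching n P \<longleftrightarrow> P \<subseteq> arrows n \<and> card P = n - 1 \<and> disjoint_arrows P"

definition chi :: "(nat \<times> nat) set \<Rightarrow> (nat \<times> nat) \<Rightarrow> int" where
  "chi M a = (if a \<in> M then 1 else 0)"

end

theory Submission
  imports Defs
begin

lemma hall:
  fixes I :: "'a set" and A :: "'a \<Rightarrow> 'b set"
  assumes "finite I" "\<forall>i\<in>I. finite (A i)" "\<forall>J\<subseteq>I. card J \<le> card (\<Union>(A ` J))"
  shows "\<exists>R. (\<forall>i\<in>I. R i \<in> A i) \<and> inj_on R I"
  using assms
proof (induction "card I" arbitrary: I A rule: less_induct)
  case less
  show ?case
  proof (cases "I = {}")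
    case True thus ?thesis by auto
  next
    case False
    show ?thesis
    proof (cases "\<exists>J. J \<subseteq> I \<and> J \<noteq> {} \<and> J \<noteq> I \<and> card (\<Union>(A ` J)) \<le> card J")
      case True
      then obtain J where J: "J \<subseteq> I" "J \<noteq> {}" "J \<noteq> I" "card (\<Union>(A ` J)) \<le> card J" by blast
      have fJ: "finite J" using J(1) less.prems(1) finite_subset by blast
      have cJ: "card J < card I" using J less.prems(1) by (meson psubsetI psubset_card_mono)
      have h1: "\<forall>i\<in>J. finite (A i)" using less.prems(2) J(1) by blast
      have h2: "\<forall>K\<subseteq>J. card K \<le> card (\<Union>(A ` K))" using less.prems(3) J(1) by blast
      have "\<exists>R. (\<forall>i\<in>J. R i \<in> A i) \<and> inj_on R J"
        by (rule less.hyps[OF cJ fJ h1 h2])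
      then obtain R1 where R1: "\<forall>i\<in>J. R1 i \<in> A i" "inj_on R1 J" by blast
      define B where "B = \<Union>(A ` J)"
      define A2 where "A2 = (\<lambda>i. A i - B)"
      have finB: "finite B" unfolding B_def using fJ J(1) less.prems(2) by auto
      have cB: "card B = card J" using J less.prems(3) unfolding B_def by (meson le_antisym)
      have cIJ: "card (I - J) < card I"
      proof -
        have "card (I - J) = card I - card J" using J(1) fJ by (simp add: card_Diff_subset)
        moreover have "card J > 0" using J(2) fJ by auto
        moreover have "card J \<le> card I" using J(1) less.prems(1) card_mono by blast
        ultimately show ?thesis by linarith
      qed
      have hall2: "\<forall>K\<subseteq>I-J. card K \<le> card (\<Union>(A2 ` K))"
      proof (intro allI impI)
        fix K assume K: "K \<subseteq> I - J"
        have fK: "finite K" using K less.prems(1) finite_subset by blast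
        have e1: "\<Union>(A2 ` K) = \<Union>(A ` (K \<union> J)) - B" by (auto simp: A2_def B_def)
        have sub: "B \<subseteq> \<Union>(A ` (K \<union> J))" unfolding B_def by auto
        have fU: "finite (\<Union>(A ` (K \<union> J)))" using fK fJ K J(1) less.prems(2) by auto
        have c1: "card (\<Union>(A2 ` K)) = card (\<Union>(A ` (K \<union> J))) - card B"
          using e1 sub fU card_Diff_subset finB by metis
        have c2: "card (K \<union> J) = card K + card J" using K fK fJ by (subst card_Un_disjoint) auto
        have c3: "card (K \<union> J) \<le> card (\<Union>(A ` (K \<union> J)))" proof -
          have "K \<union> J \<subseteq> I" using K J(1) by blast
          thus ?thesis using less.prems(3) by blast
        qed
        show "card K \<le> card (\<Union>(A2 ` K))" using c1 c2 c3 cB by linarith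
      qed
      have "\<exists>R. (\<forall>i\<in>I-J. R i \<in> A2 i) \<and> inj_on R (I-J)"
        apply (rule less.hyps[OF cIJ _ _ hall2])
        using less.prems by (auto simp: A2_def)
      then obtain R2 where R2: "\<forall>i\<in>I-J. R2 i \<in> A2 i" "inj_on R2 (I-J)" by blast
      define R where "R = (\<lambda>i. if i \<in> J then R1 i else R2 i)"
      have "\<forall>i\<in>I. R i \<in> A i" using R1 R2 by (auto simp: R_def A2_def)
      moreover have "inj_on R I"
      proof (rule inj_onI)
        fix x y assume xy: "x \<in> I" "y \<in> I" "R x = R y"
        show "x = y"
        proof (cases "x \<in> J"; cases "y \<in> J")
          assume "x \<in> J" "y \<in> J" thus ?thesis using xy R1(2) by (auto simp: R_def inj_on_def)
        next
          assume "x \<notin> J" "y \<notin> J" thus ?thesis using xy R2(2) by (auto simp: R_def inj_on_def)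
        next
          assume a: "x \<in> J" "y \<notin> J"
          have "R1 x \<in> B" using a R1(1) by (auto simp: B_def)
          moreover have "R2 y \<notin> B" using a xy R2(1) by (auto simp: A2_def)
          ultimately show ?thesis using xy a by (auto simp: R_def)
        next
          assume a: "x \<notin> J" "y \<in> J"
          have "R1 y \<in> B" using a R1(1) by (auto simp: B_def)
          moreover have "R2 x \<notin> B" using a xy R2(1) by (auto simp: A2_def)
          ultimately show ?thesis using xy a by (auto simp: R_def)
        qed
      qed
      ultimately show ?thesis by blast
    next
      case False2: False
      obtain i0 where i0: "i0 \<in> I" using False by blast
      have "card {i0} \<le> card (A i0)" proof -
        have "{i0} \<subseteq> I" using i0 by blast
        hence "card {i0} \<le> card (\<Union>(A ` {i0}))" using less.prems(3) by blast
        thus ?thesis by simp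
      qed
      then have "A i0 \<noteq> {}" by auto
      then obtain x where x: "x \<in> A i0" by blast
      define A2 where "A2 = (\<lambda>i. A i - {x})"
      have cI: "card (I - {i0}) < card I" using i0 less.prems(1) by (meson card_Diff1_less)
      have hall2: "\<forall>K\<subseteq>I-{i0}. card K \<le> card (\<Union>(A2 ` K))"
      proof (intro allI impI)
        fix K assume K: "K \<subseteq> I - {i0}"
        show "card K \<le> card (\<Union>(A2 ` K))"
        proof (cases "K = {}")
          case True thus ?thesis by simp
        next
          case False
          have "K \<noteq> I" using K i0 by auto
          hence lt: "card K < card (\<Union>(A ` K))" proof -
            have "K \<subseteq> I" using K by blast
            hence "\<not> card (\<Union>(A ` K)) \<le> card K" using False2 False \<open>K \<noteq> I\<close> by blast
            thus ?thesis by linarith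
          qed
          have e: "\<Union>(A2 ` K) = \<Union>(A ` K) - {x}" by (auto simp: A2_def)
          have "card (\<Union>(A ` K)) - 1 \<le> card (\<Union>(A ` K) - {x})"
            by (simp add: card_Diff_singleton_if)
          thus ?thesis using lt unfolding e by linarith
        qed
      qed
      have "\<exists>R. (\<forall>i\<in>I-{i0}. R i \<in> A2 i) \<and> inj_on R (I-{i0})"
        apply (rule less.hyps[OF cI _ _ hall2])
        using less.prems by (auto simp: A2_def)
      then obtain R2 where R2: "\<forall>i\<in>I-{i0}. R2 i \<in> A2 i" "inj_on R2 (I-{i0})" by blast
      define R where "R = R2(i0 := x)"
      have "\<forall>i\<in>I. R i \<in> A i" using R2 x by (auto simp: R_def A2_def)
      moreover have "inj_on R I"
        unfolding inj_on_def R_def using R2 by (auto simp: A2_def inj_on_def)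
      ultimately show ?thesis by blast
    qed
  qed
qed


lemma hall_matching:
  fixes H :: "nat \<times> nat \<Rightarrow> int" and d b :: int
  assumes nonneg: "\<forall>e. H e \<ge> 0" and d: "d > 0" "0 \<le> b" "b < d"
    and rows: "\<forall>i<n. (\<Sum>y<n. H (i,y)) \<ge> d"
    and cols: "\<forall>y<n. (\<Sum>i<n. H (i,y)) \<le> d + (if y = t then b else 0)"
  shows "\<exists>M. perfect_matching n M \<and> (\<forall>e\<in>M. H e \<ge> 1)"
proof -
  define A where "A = (\<lambda>i. {y\<in>{..<n}. H (i,y) \<ge> 1})"
  have hallc: "\<forall>X\<subseteq>{..<n}. card X \<le> card (\<Union>(A ` X))"
  proof (intro allI impI)
    fix X assume X: "X \<subseteq> {..<n}"
    define N where "N = \<Union>(A ` X)"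
    have NS: "N \<subseteq> {..<n}" by (auto simp: N_def A_def)
    have fN: "finite N" using NS finite_subset by blast
    have fX: "finite X" using X finite_subset by blast
    have "d * int (card X) = (\<Sum>i\<in>X. d)" by simp
    also have "\<dots> \<le> (\<Sum>i\<in>X. \<Sum>y<n. H (i,y))" using rows X by (intro sum_mono) auto
    also have "\<dots> = (\<Sum>i\<in>X. \<Sum>y\<in>N. H (i,y))"
    proof (rule sum.cong[OF refl])
      fix i assume i: "i \<in> X"
      show "(\<Sum>y<n. H (i,y)) = (\<Sum>y\<in>N. H (i,y))"
      proof (rule sum.mono_neutral_right)
        show "finite {..<n}" by simp
        show "N \<subseteq> {..<n}" by (rule NS)
        show "\<forall>y\<in>{..<n} - N. H (i,y) = 0"
        proof
          fix y assume y: "y \<in> {..<n} - N"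
          hence "\<not> H (i,y) \<ge> 1" using i by (auto simp: N_def A_def)
          thus "H (i,y) = 0" using nonneg[rule_format, of "(i,y)"] by linarith
        qed
      qed
    qed
    also have "\<dots> \<le> (\<Sum>i<n. \<Sum>y\<in>N. H (i,y))"
      by (rule sum_mono2) (use X nonneg in \<open>auto intro: sum_nonneg\<close>)
    also have "\<dots> = (\<Sum>y\<in>N. \<Sum>i<n. H (i,y))" by (rule sum.swap)
    also have "\<dots> \<le> (\<Sum>y\<in>N. d + (if y = t then b else 0))" using cols NS by (intro sum_mono) auto
    also have "\<dots> = d * int (card N) + (if t \<in> N then b else 0)"
      by (simp add: sum.distrib fN)
    also have "\<dots> \<le> d * int (card N) + b" using d by auto
    finally have "d * int (card X) < d * (int (card N) + 1)" using d by (simp add: algebra_simps)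
    hence "int (card X) < int (card N) + 1" using d by (simp add: mult_less_cancel_left_pos)
    thus "card X \<le> card (\<Union>(A ` X))" unfolding N_def by simp
  qed
  obtain R where R: "\<forall>i\<in>{..<n}. R i \<in> A i" "inj_on R {..<n}"
    using hall[OF _ _ hallc] by (auto simp: A_def)
  define M where "M = (\<lambda>i. (i, R i)) ` {..<n}"
  have Rn: "\<forall>i<n. R i < n \<and> H (i, R i) \<ge> 1" using R(1) by (auto simp: A_def)
  have img: "R ` {..<n} = {..<n}"
    using R(2) Rn by (intro card_subset_eq) (auto simp: card_image)
  have "perfect_matching n M"
    unfolding perfect_matching_def
  proof (intro conjI allI impI)
    show "M \<subseteq> arrows n" using Rn by (auto simp: M_def arrows_def)
  next
    fix i assume i: "i<n"
    show "\<exists>!j. (i,j) \<in> M" by (rule ex1I[of _ "R i"]) (use i in \<open>auto simp: M_def\<close>)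
  next
    fix j assume "j < n"
    then obtain i where i: "i<n" "R i = j" proof -
      have "j \<in> R ` {..<n}" using img \<open>j < n\<close> by simp
      thus ?thesis using that by blast
    qed
    show "\<exists>!i. (i,j) \<in> M"
    proof (rule ex1I[of _ i])
      show "(i,j) \<in> M" using i by (auto simp: M_def)
    next
      fix i' assume "(i',j) \<in> M"
      hence "i' < n" "R i' = j" by (auto simp: M_def)
      thus "i' = i" using i R(2) by (auto dest: inj_onD)
    qed
  qed
  moreover have "\<forall>e\<in>M. H e \<ge> 1" using Rn by (auto simp: M_def)
  ultimately show ?thesis by blast
qed



lemma chi_01: "chi M a = 0 \<or> chi M a = 1" by (simp add: chi_def)
lemma chi_ge0: "chi M a \<ge> 0" by (simp add: chi_def)

lemma arrows_finite: "finite (arrows n)" by (simp add: arrows_def)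

lemma chi_out: "M \<subseteq> arrows n \<Longrightarrow> a \<notin> arrows n \<Longrightarrow> chi M a = 0"
  by (auto simp: chi_def)

lemma pm_row: assumes "perfect_matching n M" "i < n" shows "(\<Sum>y<n. chi M (i,y)) = 1"
proof -
  have "\<exists>!j. (i,j) \<in> M" using assms unfolding perfect_matching_def by blast
  then obtain j where j: "(i,j) \<in> M" "\<forall>j'. (i,j') \<in> M \<longrightarrow> j' = j" by blast
  have "M \<subseteq> arrows n" using assms(1) unfolding perfect_matching_def by blast
  hence jn: "j < n" using j(1) unfolding arrows_def by auto
  have "(\<Sum>y<n. chi M (i,y)) = (\<Sum>y<n. if y = j then 1 else 0)"
  proof (rule sum.cong[OF refl])
    fix y assume "y \<in> {..<n}"
    show "chi M (i,y) = (if y = j then 1 else 0)"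
    proof (cases "y = j")
      case True thus ?thesis using j(1) by (simp add: chi_def)
    next
      case False
      hence "(i,y) \<notin> M" using j(2) by blast
      thus ?thesis using False by (simp add: chi_def)
    qed
  qed
  also have "\<dots> = 1" using jn by simp
  finally show ?thesis .
qed

lemma pm_col: assumes "perfect_matching n M" "j < n" shows "(\<Sum>i<n. chi M (i,j)) = 1"
proof -
  have "\<exists>!i. (i,j) \<in> M" using assms unfolding perfect_matching_def by blast
  then obtain i where i: "(i,j) \<in> M" "\<forall>i'. (i',j) \<in> M \<longrightarrow> i' = i" by blast
  have "M \<subseteq> arrows n" using assms(1) unfolding perfect_matching_def by blast
  hence jn: "i < n" using i(1) unfolding arrows_def by auto
  have "(\<Sum>y<n. chi M (y,j)) = (\<Sum>y<n. if y = i then 1 else 0)"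
  proof (rule sum.cong[OF refl])
    fix y assume "y \<in> {..<n}"
    show "chi M (y,j) = (if y = i then 1 else 0)"
    proof (cases "y = i")
      case True thus ?thesis using i(1) by (simp add: chi_def)
    next
      case False
      hence "(y,j) \<notin> M" using i(2) by blast
      thus ?thesis using False by (simp add: chi_def)
    qed
  qed
  also have "\<dots> = 1" using jn by simp
  finally show ?thesis .
qed

lemma npm_row: assumes "near_perfect_matching n P" shows "(\<Sum>y<n. chi P (i,y)) \<le> 1"
proof (cases "\<exists>j. (i,j) \<in> P")
  case True
  then obtain j where j: "(i,j) \<in> P" by blast
  have u: "\<forall>j'. (i,j') \<in> P \<longrightarrow> j' = j"
  proof (intro allI impI, rule ccontr)
    fix j' assume a: "(i,j') \<in> P" "j' \<noteq> j"
    have "disjoint_arrows P" using assms by (simp add: near_perfect_matching_def)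
    hence "fst (i,j') \<noteq> fst (i,j)" using a j unfolding disjoint_arrows_def by blast
    thus False by simp
  qed
  have "(\<Sum>y<n. chi P (i,y)) \<le> (\<Sum>y<n. if y = j then 1 else 0)"
  proof (rule sum_mono)
    fix y assume "y \<in> {..<n}"
    show "chi P (i,y) \<le> (if y = j then 1 else 0)"
    proof (cases "y = j")
      case True thus ?thesis by (simp add: chi_def)
    next
      case False
      hence "(i,y) \<notin> P" using u by blast
      thus ?thesis using False by (simp add: chi_def)
    qed
  qed
  also have "\<dots> \<le> 1" by simp
  finally show ?thesis .
next
  case False
  hence "(\<Sum>y<n. chi P (i,y)) = 0" by (simp add: chi_def)
  thus ?thesis by simp
qed

lemma npm_sink: assumes "near_perfect_matching n P" "n \<ge> 1"
  shows "\<exists>t<n. (\<forall>i. (i,t) \<notin> P) \<and> (\<forall>y<n. y \<noteq> t \<longrightarrow> (\<exists>i. (i,y) \<in> P))"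
proof -
  have sub: "P \<subseteq> arrows n" and cP: "card P = n - 1" and dis: "disjoint_arrows P"
    using assms unfolding near_perfect_matching_def by auto
  have inj: "inj_on snd P" using dis unfolding disjoint_arrows_def inj_on_def by blast
  have S: "snd ` P \<subseteq> {..<n}" using sub by (auto simp: arrows_def)
  have c: "card (snd ` P) = n - 1" using inj cP by (simp add: card_image)
  have "card ({..<n} - snd ` P) = 1" using S c assms(2) by (simp add: card_Diff_subset finite_subset)
  then obtain t where t: "{..<n} - snd ` P = {t}" by (auto simp: card_1_singleton_iff)
  have "t < n" "\<forall>i. (i,t) \<notin> P" proof -
    have "t \<in> {..<n} - snd ` P" using t by simp
    thus "t < n" "\<forall>i. (i,t) \<notin> P" by (auto simp: image_iff)
  qed
  moreover have "\<forall>y<n. y \<noteq> t \<longrightarrow> (\<exists>i. (i,y) \<in> P)"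
  proof (intro allI impI)
    fix y assume "y<n" "y\<noteq>t"
    hence "y \<in> snd ` P" using t by blast
    thus "\<exists>i. (i,y) \<in> P" by force
  qed
  ultimately show ?thesis by blast
qed

lemma npm_source: assumes "near_perfect_matching n P" "n \<ge> 1"
  shows "\<exists>s<n. (\<forall>y. (s,y) \<notin> P) \<and> (\<forall>i<n. i \<noteq> s \<longrightarrow> (\<exists>y. (i,y) \<in> P))"
proof -
  have sub: "P \<subseteq> arrows n" and cP: "card P = n - 1" and dis: "disjoint_arrows P"
    using assms unfolding near_perfect_matching_def by auto
  have inj: "inj_on fst P" using dis unfolding disjoint_arrows_def inj_on_def by blast
  have S: "fst ` P \<subseteq> {..<n}" using sub by (auto simp: arrows_def)
  have c: "card (fst ` P) = n - 1" using inj cP by (simp add: card_image)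
  have "card ({..<n} - fst ` P) = 1" using S c assms(2) by (simp add: card_Diff_subset finite_subset)
  then obtain t where t: "{..<n} - fst ` P = {t}" by (auto simp: card_1_singleton_iff)
  have "t < n" "\<forall>i. (t,i) \<notin> P" proof -
    have "t \<in> {..<n} - fst ` P" using t by simp
    thus "t < n" "\<forall>i. (t,i) \<notin> P" by (auto simp: image_iff)
  qed
  moreover have "\<forall>y<n. y \<noteq> t \<longrightarrow> (\<exists>i. (y,i) \<in> P)"
  proof (intro allI impI)
    fix y assume "y<n" "y\<noteq>t"
    hence "y \<in> fst ` P" using t by blast
    thus "\<exists>i. (y,i) \<in> P" by force
  qed
  ultimately show ?thesis by blast
qed



theorem lemma9p2:
  fixes n k l :: nat and m q :: "nat \<Rightarrow> (nat \<times> nat) set" and p :: "(nat \<times> nat) set"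
  assumes "n \<ge> 2" and "k \<ge> 4"
    and "\<forall>i\<in>{1..k}. perfect_matching n (m i)"
    and "\<forall>i\<in>{1..k}. perfect_matching n (q i)"
    and "\<forall>a. (\<Sum>i=1..k. chi (m i) a) = (\<Sum>i=1..k. chi (q i) a)"
    and "l \<le> n - 2"
    and "near_perfect_matching n p"
    and "\<forall>a. chi p a \<le> chi (m 1) a + chi (m 2) a"
    and "card (p \<inter> q 1) = l"
  shows "\<exists>j m1' m2' mj' p'. 3 \<le> j \<and> j \<le> k \<and>
           perfect_matching n m1' \<and> perfect_matching n m2' \<and> perfect_matching n mj' \<and>
           near_perfect_matching n p' \<and>
           (\<forall>a. chi (m 1) a + chi (m 2) a + chi (m j) a = chi m1' a + chi m2' a + chi mj' a) \<and>
           (\<forall>a. chi p' a \<le> chi m1' a + chi m2' a) \<and>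
           card (p' \<inter> q 1) = l + 1"
proof -
  have n1: "n \<ge> 1" using assms(1) by simp
  have pm1: "perfect_matching n (m 1)" using assms(2,3) by auto
  have pm2: "perfect_matching n (m 2)" using assms(2,3) by auto
  have pq: "perfect_matching n (q 1)" using assms(2,4) by auto
  obtain s where s: "s<n" "\<forall>y. (s,y) \<notin> p" "\<forall>i<n. i \<noteq> s \<longrightarrow> (\<exists>y. (i,y) \<in> p)"
    using npm_source[OF assms(7) n1] by blast
  obtain t0 where t0: "t0<n" "\<forall>i. (i,t0) \<notin> p" "\<forall>y<n. y \<noteq> t0 \<longrightarrow> (\<exists>i. (i,y) \<in> p)"
    using npm_sink[OF assms(7) n1] by blast
  have "\<exists>!y. (s,y) \<in> q 1" using pq s(1) unfolding perfect_matching_def by blast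
  then obtain t' where t': "(s,t') \<in> q 1" by blast
  have "q 1 \<subseteq> arrows n" using pq unfolding perfect_matching_def by blast
  hence t'n: "t' < n" using t' unfolding arrows_def by auto
  have q1sink: "\<forall>i. (i,t') \<in> q 1 \<longrightarrow> i = s"
  proof -
    have "\<exists>!i. (i,t') \<in> q 1" using pq t'n unfolding perfect_matching_def by blast
    thus ?thesis using t' by blast
  qed
  have psub: "p \<subseteq> arrows n" and cp: "card p = n - 1" and dp: "disjoint_arrows p"
    using assms(7) unfolding near_perfect_matching_def by auto
  have fp: "finite p" using psub arrows_finite finite_subset by blast
  obtain x where x: "x \<in> p" "x \<notin> q 1" "snd x = t' \<or> t' = t0"
  proof (cases "t' = t0")
    case True
    have "p \<inter> q 1 \<noteq> p"
    proof
      assume "p \<inter> q 1 = p"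
      hence "card p = l" using assms(9) by simp
      thus False using cp assms(6) assms(1) by linarith
    qed
    then obtain x where "x \<in> p" "x \<notin> q 1" by blast
    thus ?thesis using that True by blast
  next
    case False
    obtain i where i: "(i,t') \<in> p" using t0(3) t'n False by blast
    have "(i,t') \<notin> q 1"
    proof
      assume "(i,t') \<in> q 1" hence "i = s" using q1sink by blast
      thus False using i s(2) by blast
    qed
    thus ?thesis using that[of "(i,t')"] i by simp
  qed
  define e where "e = (s,t')"
  define p' where "p' = insert e (p - {x})"
  have ep: "e \<notin> p" using s(2) by (simp add: e_def)
  have eq: "e \<in> q 1" using t' by (simp add: e_def)
  have earr: "e \<in> arrows n" using s(1) t'n by (simp add: e_def arrows_def)
  have npm': "near_perfect_matching n p'"
    unfolding near_perfect_matching_def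
  proof (intro conjI)
    show "p' \<subseteq> arrows n" using psub earr by (auto simp: p'_def)
    have "card (p - {x}) = n - 2" using cp x(1) fp by (simp add: card_Diff_singleton)
    hence "card p' = Suc (n-2)" using ep fp by (simp add: p'_def)
    thus "card p' = n - 1" using assms(1) by simp
    show "disjoint_arrows p'"
      unfolding disjoint_arrows_def
    proof (intro ballI impI)
      fix a b assume a: "a \<in> p'" "b \<in> p'" "a \<noteq> b"
      have key: "\<forall>c\<in>p - {x}. fst c \<noteq> fst e \<and> snd c \<noteq> snd e"
      proof
        fix c assume c: "c \<in> p - {x}"
        have "fst c \<noteq> s" using c s(2) by (cases c) auto
        moreover have "snd c \<noteq> t'"
        proof
          assume sc: "snd c = t'"
          from x(3) show False
          proof
            assume sx: "snd x = t'"
            have "c \<noteq> x" "c \<in> p" using c by auto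
            hence "fst c \<noteq> fst x \<and> snd c \<noteq> snd x" using dp x(1) unfolding disjoint_arrows_def by blast
            thus False using sc sx by simp
          next
            assume "t' = t0" thus False using c sc t0(2) by (cases c) auto
          qed
        qed
        ultimately show "fst c \<noteq> fst e \<and> snd c \<noteq> snd e" by (simp add: e_def)
      qed
      show "fst a \<noteq> fst b \<and> snd a \<noteq> snd b"
      proof (cases "a = e")
        case True
        hence "b \<in> p - {x}" using a by (auto simp: p'_def)
        thus ?thesis using key True by auto
      next
        case False
        hence ap: "a \<in> p - {x}" using a(1) by (auto simp: p'_def)
        show ?thesis
        proof (cases "b = e")
          case True thus ?thesis using key ap by auto
        next
          case False
          hence "b \<in> p - {x}" using a(2) by (auto simp: p'_def)
          thus ?thesis using ap a(3) dp unfolding disjoint_arrows_def by blast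
        qed
      qed
    qed
  qed
  have cq: "card (p' \<inter> q 1) = l + 1"
  proof -
    have "p' \<inter> q 1 = insert e (p \<inter> q 1)" using x(2) eq by (auto simp: p'_def)
    moreover have "e \<notin> p \<inter> q 1" using ep by blast
    ultimately show ?thesis using fp assms(9) by simp
  qed
  have pm12: "p \<subseteq> m 1 \<union> m 2"
  proof
    fix a assume "a \<in> p"
    hence "chi p a = 1" by (simp add: chi_def)
    hence "1 \<le> chi (m 1) a + chi (m 2) a" using assms(8)[rule_format, of a] by simp
    thus "a \<in> m 1 \<union> m 2" by (auto simp: chi_def split: if_splits)
  qed
  obtain i where i: "i \<in> {1..k}" "e \<in> m i"
  proof -
    have "chi (q 1) e \<le> (\<Sum>i=1..k. chi (q i) e)"
      using assms(2) by (intro member_le_sum) (auto simp: chi_ge0)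
    moreover have "chi (q 1) e = 1" using eq by (simp add: chi_def)
    moreover have "(\<Sum>i=1..k. chi (m i) e) = (\<Sum>i=1..k. chi (q i) e)" using assms(5) by blast
    ultimately have "(\<Sum>i=1..k. chi (m i) e) \<noteq> 0" by linarith
    then obtain i where "i \<in> {1..k}" "chi (m i) e \<noteq> 0"
      using sum.not_neutral_contains_not_neutral by blast
    thus ?thesis using that by (simp add: chi_def split: if_splits)
  qed
  define j where "j = (if e \<in> m 1 \<union> m 2 then 3 else i)"
  have j3: "3 \<le> j" "j \<le> k"
  proof -
    show "3 \<le> j"
    proof (cases "e \<in> m 1 \<union> m 2")
      case True thus ?thesis by (simp add: j_def)
    next
      case False
      hence "i \<noteq> 1" "i \<noteq> 2" using i(2) by auto
      thus ?thesis using False i(1) by (simp add: j_def)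
    qed
    show "j \<le> k" using assms(2) i(1) by (simp add: j_def)
  qed
  have pmj: "perfect_matching n (m j)" using assms(3) j3 by auto
  have p'sub: "p' \<subseteq> m 1 \<union> m 2 \<union> m j"
    using pm12 i(2) by (auto simp: p'_def j_def split: if_splits)
  define D where "D a = chi (m 1) a + chi (m 2) a + chi (m j) a" for a
  define H where "H a = D a - chi p' a" for a
  have Dnn: "\<forall>a. D a \<ge> 0" by (simp add: D_def chi_def)
  have Hnn: "\<forall>a. H a \<ge> 0"
  proof
    fix a show "0 \<le> H a"
    proof (cases "a \<in> p'")
      case True hence "a \<in> m 1 \<union> m 2 \<union> m j" using p'sub by blast
      thus ?thesis by (auto simp: H_def D_def chi_def)
    next
      case False thus ?thesis by (simp add: H_def D_def chi_def)
    qed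
  qed
  have Drow: "\<forall>i<n. (\<Sum>y<n. D (i,y)) = 3"
  proof (intro allI impI)
    fix i assume i: "i < n"
    show "(\<Sum>y<n. D (i,y)) = 3"
      unfolding D_def sum.distrib pm_row[OF pm1 i] pm_row[OF pm2 i] pm_row[OF pmj i] by simp
  qed
  have Dcol: "\<forall>y<n. (\<Sum>i<n. D (i,y)) = 3"
  proof (intro allI impI)
    fix y assume y: "y < n"
    show "(\<Sum>i<n. D (i,y)) = 3"
      unfolding D_def sum.distrib pm_col[OF pm1 y] pm_col[OF pm2 y] pm_col[OF pmj y] by simp
  qed
  have Hrow: "\<forall>i<n. (\<Sum>y<n. H (i,y)) \<ge> 2"
  proof (intro allI impI)
    fix i assume i: "i < n"
    have "(\<Sum>y<n. H (i,y)) = 3 - (\<Sum>y<n. chi p' (i,y))" using Drow i by (simp add: H_def sum_subtractf)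
    thus "(\<Sum>y<n. H (i,y)) \<ge> 2" using npm_row[OF npm', of i] by linarith
  qed
  obtain t where t: "t<n" "\<forall>i. (i,t) \<notin> p'" "\<forall>y<n. y \<noteq> t \<longrightarrow> (\<exists>i. (i,y) \<in> p')"
    using npm_sink[OF npm' n1] by blast
  have Hcol: "\<forall>y<n. (\<Sum>i<n. H (i,y)) \<le> 2 + (if y = t then 1 else 0)"
  proof (intro allI impI)
    fix y assume y: "y < n"
    have eqH: "(\<Sum>i<n. H (i,y)) = 3 - (\<Sum>i<n. chi p' (i,y))" using Dcol y by (simp add: H_def sum_subtractf)
    show "(\<Sum>i<n. H (i,y)) \<le> 2 + (if y = t then 1 else 0)"
    proof (cases "y = t")
      case True
      have "(\<Sum>i<n. chi p' (i,y)) \<ge> 0" by (intro sum_nonneg) (simp add: chi_ge0)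
      thus ?thesis using eqH True by simp
    next
      case False
      then obtain i0 where i0: "(i0,y) \<in> p'" using t(3) y by blast
      have "p' \<subseteq> arrows n" using npm' unfolding near_perfect_matching_def by blast
      hence "i0 < n" using i0 unfolding arrows_def by auto
      hence "chi p' (i0,y) \<le> (\<Sum>i<n. chi p' (i,y))"
        by (intro member_le_sum[where f="\<lambda>i. chi p' (i,y)"]) (auto simp: chi_ge0)
      thus ?thesis using eqH False i0 by (simp add: chi_def)
    qed
  qed
  obtain c where c: "perfect_matching n c" "\<forall>e\<in>c. H e \<ge> 1"
    using hall_matching[where H=H and d=2 and b=1 and n=n and t=t] Hnn Hrow Hcol by auto
  define H2 where "H2 a = D a - chi c a" for a
  have H2nn: "\<forall>a. H2 a \<ge> 0"
  proof
    fix a show "0 \<le> H2 a"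
    proof (cases "a \<in> c")
      case True hence "H a \<ge> 1" using c(2) by blast
      thus ?thesis using True by (simp add: H2_def H_def chi_def split: if_splits)
    next
      case False thus ?thesis using Dnn[rule_format, of a] by (simp add: H2_def chi_def)
    qed
  qed
  have H2row: "\<forall>i<n. (\<Sum>y<n. H2 (i,y)) \<ge> 2"
    using Drow by (simp add: H2_def sum_subtractf pm_row c(1))
  have H2col: "\<forall>y<n. (\<Sum>i<n. H2 (i,y)) \<le> 2 + (if y = 0 then 0 else 0)"
    using Dcol by (simp add: H2_def sum_subtractf pm_col c(1))
  obtain M1 where M1: "perfect_matching n M1" "\<forall>e\<in>M1. H2 e \<ge> 1"
    using hall_matching[where H=H2 and d=2 and b=0 and n=n and t=0] H2nn H2row H2col by auto
  define H3 where "H3 a = H2 a - chi M1 a" for a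
  have H3nn: "\<forall>a. H3 a \<ge> 0"
  proof
    fix a show "0 \<le> H3 a"
    proof (cases "a \<in> M1")
      case True hence "H2 a \<ge> 1" using M1(2) by blast
      thus ?thesis using True by (simp add: H3_def chi_def)
    next
      case False thus ?thesis using H2nn[rule_format, of a] by (simp add: H3_def chi_def)
    qed
  qed
  have H3row: "\<forall>i<n. (\<Sum>y<n. H3 (i,y)) = 1"
    using Drow by (simp add: H3_def H2_def sum_subtractf pm_row c(1) M1(1))
  have H3col: "\<forall>y<n. (\<Sum>i<n. H3 (i,y)) \<le> 1 + (if y = 0 then 0 else 0)"
    using Dcol by (simp add: H3_def H2_def sum_subtractf pm_col c(1) M1(1))
  obtain M2 where M2: "perfect_matching n M2" "\<forall>e\<in>M2. H3 e \<ge> 1"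
    using hall_matching[where H=H3 and d=1 and b=0 and n=n and t=0] H3nn H3row H3col by auto
  define H4 where "H4 a = H3 a - chi M2 a" for a
  have H4nn: "\<forall>a. H4 a \<ge> 0"
  proof
    fix a show "0 \<le> H4 a"
    proof (cases "a \<in> M2")
      case True hence "H3 a \<ge> 1" using M2(2) by blast
      thus ?thesis using True by (simp add: H4_def chi_def)
    next
      case False thus ?thesis using H3nn[rule_format, of a] by (simp add: H4_def chi_def)
    qed
  qed
  have H4row: "\<forall>i<n. (\<Sum>y<n. H4 (i,y)) = 0"
    using H3row by (simp add: H4_def sum_subtractf pm_row M2(1))
  have sub_arr: "\<And>M. perfect_matching n M \<Longrightarrow> M \<subseteq> arrows n" unfolding perfect_matching_def by blast
  have zero: "\<forall>a. H4 a = 0"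
  proof
    fix a show "H4 a = 0"
    proof (cases "a \<in> arrows n")
      case False
      thus ?thesis using chi_out[OF sub_arr[OF pm1] False] chi_out[OF sub_arr[OF pm2] False]
          chi_out[OF sub_arr[OF pmj] False] chi_out[OF sub_arr[OF c(1)] False]
          chi_out[OF sub_arr[OF M1(1)] False] chi_out[OF sub_arr[OF M2(1)] False]
        by (simp add: H4_def H3_def H2_def D_def)
    next
      case True
      obtain a1 a2 where a: "a = (a1,a2)" by (cases a)
      have a12: "a1 < n" "a2 < n" using True a by (auto simp: arrows_def)
      have "\<forall>y\<in>{..<n}. H4 (a1,y) = 0"
        using sum_nonneg_eq_0_iff[of "{..<n}" "\<lambda>y. H4 (a1,y)"] H4row a12(1) H4nn by auto
      thus ?thesis using a a12 by auto
    qed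
  qed
  have sumeq: "\<forall>a. chi (m 1) a + chi (m 2) a + chi (m j) a = chi M1 a + chi M2 a + chi c a"
    using zero by (simp add: H4_def H3_def H2_def D_def algebra_simps)
  have le: "\<forall>a. chi p' a \<le> chi M1 a + chi M2 a"
  proof
    fix a
    have "H a \<ge> chi c a" using c(2) Hnn[rule_format, of a] by (cases "a \<in> c") (auto simp: chi_def)
    thus "chi p' a \<le> chi M1 a + chi M2 a"
      using zero[rule_format, of a] by (simp add: H4_def H3_def H2_def H_def)
  qed
  show ?thesis
    using j3 M1(1) M2(1) c(1) npm' sumeq le cq by blast
qed


end
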